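(* For every $\epsilon$ with $0<\epsilon<D/5$ and every conical limit point $z\in\partial(\Gamma,\mathcal{P})$, there exist $\alpha_z\in\Gamma$ and open neighborhoods $V(z)\subset W(z)$ of $z$ such that (1) $\operatorname{diam}(W(z))\le\epsilon$; (2) $\operatorname{diam}(\alpha_z^{-1}W(z))>4\epsilon$; (3) $\overline{N}_{2\epsilon}(\alpha_z^{-1}V(z))\subset\alpha_z^{-1}W(z)$.
   Context: $\Gamma$ is a finitely generated group hyperbolic relative to a finite nonempty collection $\mathcal{P}$ of infinite subgroups, and $(\Gamma,\mathcal{P})$ is non-elementary ($\mathcal{P}\ne\{\Gamma\}$ and $\Gamma$ is neither finite nor virtually cyclic). $\partial(\Gamma,\mathcal{P})$ is the Bowditch boundary with a fixed metric $d_\partial$; $\overline{N}_r(Y)$ denotes the closed $r$-neighborhood and $\operatorname{diam}$ the diameter with respect to $d_\partial$. A point $z$ is a conical limit point if there exist distinct $a,b\in\partial(\Gamma,\mathcal{P})$ and $g_i\in\Gamma$ with $g_iz\to b$ and $g_ix\to a$ uniformly on compact subsets of $\partial(\Gamma,\mathcal{P})\setminus\{z\}$. $D>0$ is a fixed constant such that for any distinct $x,y\in\partial(\Gamma,\mathcal{P})$ there is $g\in\Gamma$ with $d_\partial(gx,gy)>D$ (it exists since $\Gamma$ acts cocompactly on pairs of distinct points). *)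

theory Defs
  imports "HOL-Analysis.Analysis" "HOL-Algebra.Group_Action" "HOL-Algebra.Generated_Groups"
begin

text \<open>Setting. The boundary is a set X in a metric space (metric = dist, the fixed metric
  d_partial), the group G (HOL-Algebra) acts on X via phi by homeomorphisms.\<close>

definition action_by_homeos ::
  "('g, 'b) monoid_scheme \<Rightarrow> 'a::metric_space set \<Rightarrow> ('g \<Rightarrow> 'a \<Rightarrow> 'a) \<Rightarrow> bool" where
  "action_by_homeos G X \<phi> \<longleftrightarrow> group_action G X \<phi> \<and> (\<forall>g\<in>carrier G. continuous_on X (\<phi> g))"

definition finitely_generated_group :: "('g, 'b) monoid_scheme \<Rightarrow> bool" where
  "finitely_generated_group G \<longleftrightarrow> (\<exists>S. finite S \<and> S \<subseteq> carrier G \<and> generate G S = carrier G)"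

definition virtually_cyclic :: "('g, 'b) monoid_scheme \<Rightarrow> bool" where
  "virtually_cyclic G \<longleftrightarrow>
     (\<exists>H. subgroup H G \<and> finite (rcosets\<^bsub>G\<^esub> H) \<and> (\<exists>h\<in>H. generate G {h} = H))"

definition convergence_action ::
  "('g, 'b) monoid_scheme \<Rightarrow> 'a::metric_space set \<Rightarrow> ('g \<Rightarrow> 'a \<Rightarrow> 'a) \<Rightarrow> bool" where
  "convergence_action G X \<phi> \<longleftrightarrow>
     (\<forall>g::nat \<Rightarrow> 'g. (\<forall>n. g n \<in> carrier G) \<and> inj g \<longrightarrow>
        (\<exists>r a b. strict_mono r \<and> a \<in> X \<and> b \<in> X \<and>
           (\<forall>K. compact K \<and> K \<subseteq> X - {b} \<longrightarrow>
              uniform_limit K (\<lambda>n. \<phi> (g (r n))) (\<lambda>_. a) sequentially)))"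

definition conical_limit_point ::
  "('g, 'b) monoid_scheme \<Rightarrow> 'a::metric_space set \<Rightarrow> ('g \<Rightarrow> 'a \<Rightarrow> 'a) \<Rightarrow> 'a \<Rightarrow> bool" where
  "conical_limit_point G X \<phi> z \<longleftrightarrow> z \<in> X \<and>
     (\<exists>a b (g::nat \<Rightarrow> 'g). a \<in> X \<and> b \<in> X \<and> a \<noteq> b \<and> (\<forall>i. g i \<in> carrier G) \<and>
        ((\<lambda>i. \<phi> (g i) z) \<longlonglongrightarrow> b) \<and>
        (\<forall>K. compact K \<and> K \<subseteq> X - {z} \<longrightarrow>
           uniform_limit K (\<lambda>i. \<phi> (g i)) (\<lambda>_. a) sequentially))"

definition stabilizer ::
  "('g, 'b) monoid_scheme \<Rightarrow> ('g \<Rightarrow> 'a \<Rightarrow> 'a) \<Rightarrow> 'a \<Rightarrow> 'g set" where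
  "stabilizer G \<phi> p = {g \<in> carrier G. \<phi> g p = p}"

definition loxodromic ::
  "('g, 'b) monoid_scheme \<Rightarrow> 'a set \<Rightarrow> ('g \<Rightarrow> 'a \<Rightarrow> 'a) \<Rightarrow> 'g \<Rightarrow> bool" where
  "loxodromic G X \<phi> g \<longleftrightarrow> g \<in> carrier G \<and> (\<forall>n::nat. n > 0 \<longrightarrow> g [^]\<^bsub>G\<^esub> n \<noteq> \<one>\<^bsub>G\<^esub>) \<and>
     card {x \<in> X. \<phi> g x = x} = 2"

definition parabolic_point ::
  "('g, 'b) monoid_scheme \<Rightarrow> 'a::metric_space set \<Rightarrow> ('g \<Rightarrow> 'a \<Rightarrow> 'a) \<Rightarrow> 'a \<Rightarrow> bool" where
  "parabolic_point G X \<phi> p \<longleftrightarrow> p \<in> X \<and> infinite (stabilizer G \<phi> p) \<and>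
     (\<forall>g\<in>stabilizer G \<phi> p. \<not> loxodromic G X \<phi> g)"

definition bounded_parabolic_point ::
  "('g, 'b) monoid_scheme \<Rightarrow> 'a::metric_space set \<Rightarrow> ('g \<Rightarrow> 'a \<Rightarrow> 'a) \<Rightarrow> 'a \<Rightarrow> bool" where
  "bounded_parabolic_point G X \<phi> p \<longleftrightarrow> parabolic_point G X \<phi> p \<and>
     (\<exists>K. compact K \<and> K \<subseteq> X - {p} \<and> (\<Union>h\<in>stabilizer G \<phi> p. \<phi> h ` K) = X - {p})"

text \<open>Bowditch's dynamical definition: (G, P) is relatively hyperbolic with Bowditch
  boundary X iff G acts on the nonempty perfect compact metrizable space X by homeomorphisms
  as a geometrically finite convergence group (every point conical or bounded parabolic)
  whose maximal parabolic subgroups (stabilizers of parabolic points) are exactly the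
  conjugates of the members of P.\<close>
definition bowditch_boundary ::
  "('g, 'b) monoid_scheme \<Rightarrow> 'g set set \<Rightarrow> 'a::metric_space set \<Rightarrow> ('g \<Rightarrow> 'a \<Rightarrow> 'a) \<Rightarrow> bool" where
  "bowditch_boundary G \<P> X \<phi> \<longleftrightarrow>
     X \<noteq> {} \<and> compact X \<and> (\<forall>x\<in>X. x islimpt X) \<and>
     action_by_homeos G X \<phi> \<and> convergence_action G X \<phi> \<and>
     (\<forall>x\<in>X. conical_limit_point G X \<phi> x \<or> bounded_parabolic_point G X \<phi> x) \<and>
     {stabilizer G \<phi> p | p. parabolic_point G X \<phi> p} =
       {(\<Union>h\<in>P. {g \<otimes>\<^bsub>G\<^esub> h \<otimes>\<^bsub>G\<^esub> inv\<^bsub>G\<^esub> g}) | g P. g \<in> carrier G \<and> P \<in> \<P>}"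

definition closed_nbhd :: "'a::metric_space set \<Rightarrow> real \<Rightarrow> 'a set \<Rightarrow> 'a set" where
  "closed_nbhd X r Y = {x \<in> X. infdist x Y \<le> r}"

end

theory Submission
  imports Defs
begin

lemma core:
  fixes X :: "'a::metric_space set" and f :: "'a \<Rightarrow> 'a"
  assumes X: "compact X" and fX: "f ` X = X" and fc: "continuous_on X f" and z: "z \<in> X"
    and e: "0 < \<epsilon>" and AB: "dist A B > 5 * \<epsilon>" and r: "r \<in> X"
    and eta: "0 < \<eta>" "\<eta> \<le> dist r A" "dist r A < \<epsilon>/2" "\<eta> \<le> \<epsilon>/4"
    and fz: "dist (f z) B < \<eta>"
    and fK: "\<forall>x\<in>X - ball z (\<epsilon>/2). dist (f x) A < \<eta>"
  shows "\<exists>V W. openin (top_of_set X) V \<and> openin (top_of_set X) W \<and> z \<in> V \<and> V \<subseteq> W \<and>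
        diameter W \<le> \<epsilon> \<and> diameter (f ` W) > 4 * \<epsilon> \<and>
        closed_nbhd X (2 * \<epsilon>) (f ` V) \<subseteq> f ` W"
proof -
  define W where "W = X \<inter> ball z (\<epsilon>/2)"
  define V where "V = W \<inter> (X \<inter> f -` ball (f z) \<eta>)"
  have oW: "openin (top_of_set X) W" unfolding W_def by auto
  have oV: "openin (top_of_set X) V" unfolding V_def
    using oW continuous_openin_preimage_gen[OF fc, of "ball (f z) \<eta>"] by auto
  have zV: "z \<in> V" using z e eta unfolding V_def W_def by auto
  have VW: "V \<subseteq> W" unfolding V_def by auto
  have dW: "diameter W \<le> \<epsilon>"
  proof -
    have "\<forall>x\<in>W. \<forall>y\<in>W. dist x y \<le> \<epsilon>"
    proof (intro ballI)
      fix x y assume "x \<in> W" "y \<in> W"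
      then have "dist z x < \<epsilon>/2" "dist z y < \<epsilon>/2" unfolding W_def by auto
      then show "dist x y \<le> \<epsilon>" using dist_triangle2[of x y z] by (simp add: dist_commute)
    qed
    then show ?thesis unfolding diameter_def using e
      by (auto intro!: cSUP_least)
  qed
  have inW: "x \<in> f ` W" if "x \<in> X" "dist x A \<ge> \<eta>" for x
  proof -
    have "x \<in> f ` X" using fX that(1) by simp
    then obtain w where w: "w \<in> X" "x = f w" by blast
    show ?thesis
    proof (cases "w \<in> W")
      case True then show ?thesis using w by auto
    next
      case False
      then have "w \<in> X - ball z (\<epsilon>/2)" using w unfolding W_def by auto
      then have "dist (f w) A < \<eta>" using fK by auto
      then show ?thesis using w that by auto
    qed
  qed
  have bX: "bounded X" using X compact_imp_bounded by auto
  have fWX: "f ` W \<subseteq> X" using fX unfolding W_def by auto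
  have d2: "diameter (f ` W) > 4 * \<epsilon>"
  proof -
    have rW: "r \<in> f ` W" using inW r eta by auto
    have fzW: "f z \<in> f ` W" using zV VW by auto
    have "dist A B \<le> dist A r + dist r B" by (rule dist_triangle)
    moreover have "dist r B \<le> dist r (f z) + dist (f z) B" by (rule dist_triangle)
    ultimately have "dist A B \<le> dist A r + dist r (f z) + dist (f z) B" by linarith
    then have "dist r (f z) > 4 * \<epsilon>" using AB fz eta by (simp add: dist_commute)
    moreover have "dist r (f z) \<le> diameter (f ` W)"
      using diameter_bounded_bound[OF bounded_subset[OF bX fWX] rW fzW] .
    ultimately show ?thesis by linarith
  qed
  have d3: "closed_nbhd X (2 * \<epsilon>) (f ` V) \<subseteq> f ` W"
  proof
    fix x assume "x \<in> closed_nbhd X (2 * \<epsilon>) (f ` V)"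
    then have x: "x \<in> X" "infdist x (f ` V) \<le> 2 * \<epsilon>" unfolding closed_nbhd_def by auto
    have ne: "f ` V \<noteq> {}" using zV by auto
    have "dist x (f z) - \<eta> \<le> infdist x (f ` V)"
      unfolding infdist_notempty[OF ne]
    proof (rule cINF_greatest[OF ne])
      fix s assume "s \<in> f ` V"
      then have "dist s (f z) < \<eta>" unfolding V_def by (auto simp: dist_commute)
      then show "dist x (f z) - \<eta> \<le> dist x s" using dist_triangle[of x "f z" s]
        by (simp add: dist_commute)
    qed
    then have "dist x (f z) \<le> 2 * \<epsilon> + \<eta>" using x by linarith
    moreover have "dist A B \<le> dist A x + dist x (f z) + dist (f z) B"
    proof -
      have "dist A B \<le> dist A x + dist x B" by (rule dist_triangle)
      moreover have "dist x B \<le> dist x (f z) + dist (f z) B" by (rule dist_triangle)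
      ultimately show ?thesis by linarith
    qed
    ultimately have "dist x A \<ge> \<eta>" using AB fz eta by (simp add: dist_commute)
    then show "x \<in> f ` W" using inW x by auto
  qed
  show ?thesis using oV oW zV VW dW d2 d3 by blast
qed

theorem mainTheorem3:
  fixes G :: "('g, 'b) monoid_scheme" and \<P> :: "'g set set"
    and X :: "'a::metric_space set" and \<phi> :: "'g \<Rightarrow> 'a \<Rightarrow> 'a" and D :: real
  assumes grp: "group G"
    and fg: "finitely_generated_group G"
    and P_fin: "finite \<P>" and P_ne: "\<P> \<noteq> {}"
    and P_sub: "\<forall>P\<in>\<P>. subgroup P G \<and> infinite P"
    and relhyp: "bowditch_boundary G \<P> X \<phi>"
    and nonelem: "\<P> \<noteq> {carrier G}" "infinite (carrier G)" "\<not> virtually_cyclic G"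
    and D_pos: "D > 0"
    and D_prop: "\<forall>x\<in>X. \<forall>y\<in>X. x \<noteq> y \<longrightarrow> (\<exists>g\<in>carrier G. dist (\<phi> g x) (\<phi> g y) > D)"
  shows "\<forall>\<epsilon> z. 0 < \<epsilon> \<and> \<epsilon> < D / 5 \<and> conical_limit_point G X \<phi> z \<longrightarrow>
     (\<exists>\<alpha>\<in>carrier G. \<exists>V W.
        openin (top_of_set X) V \<and> openin (top_of_set X) W \<and> z \<in> V \<and> V \<subseteq> W \<and>
        diameter W \<le> \<epsilon> \<and>
        diameter (\<phi> (inv\<^bsub>G\<^esub> \<alpha>) ` W) > 4 * \<epsilon> \<and>
        closed_nbhd X (2 * \<epsilon>) (\<phi> (inv\<^bsub>G\<^esub> \<alpha>) ` V) \<subseteq> \<phi> (inv\<^bsub>G\<^esub> \<alpha>) ` W)"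
proof (intro allI impI)
  fix \<epsilon> :: real and z assume hyp: "0 < \<epsilon> \<and> \<epsilon> < D / 5 \<and> conical_limit_point G X \<phi> z"
  then have e: "0 < \<epsilon>" "\<epsilon> < D/5" and cz: "conical_limit_point G X \<phi> z" by auto
  have ga: "group_action G X \<phi>" and cont: "\<forall>g\<in>carrier G. continuous_on X (\<phi> g)"
    and Xc: "compact X" and lp: "\<forall>x\<in>X. x islimpt X"
    using relhyp by (auto simp: bowditch_boundary_def action_by_homeos_def)
  obtain a b g where z: "z \<in> X" and ab: "a \<in> X" "b \<in> X" "a \<noteq> b" and gG: "\<forall>i. g i \<in> carrier G"
    and gz: "(\<lambda>i. \<phi> (g i) z) \<longlonglongrightarrow> b"
    and gu: "\<forall>K. compact K \<and> K \<subseteq> X - {z} \<longrightarrow> uniform_limit K (\<lambda>i. \<phi> (g i)) (\<lambda>_. a) sequentially"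
    using cz unfolding conical_limit_point_def by blast
  obtain h where h: "h \<in> carrier G" "dist (\<phi> h a) (\<phi> h b) > D" using D_prop ab by blast
  define A where "A = \<phi> h a"
  define B where "B = \<phi> h b"
  have AX: "A \<in> X" unfolding A_def using group_action.element_image[OF ga h(1) ab(1)] by blast
  obtain r where r: "r \<in> X" "r \<noteq> A" "dist r A < \<epsilon>/2"
    using lp AX e unfolding islimpt_approachable by (meson half_gt_zero)
  define \<eta> where "\<eta> = min (\<epsilon>/4) (dist r A)"
  have eta: "0 < \<eta>" "\<eta> \<le> dist r A" "\<eta> \<le> \<epsilon>/4" using r e unfolding \<eta>_def by auto
  have uc: "uniformly_continuous_on X (\<phi> h)" using compact_uniformly_continuous cont h(1) Xc by blast
  obtain d where d: "d > 0" "\<forall>x\<in>X. \<forall>x'\<in>X. dist x' x < d \<longrightarrow> dist (\<phi> h x') (\<phi> h x) < \<eta>"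
    using uc eta(1) unfolding uniformly_continuous_on_def by blast
  define K where "K = X - ball z (\<epsilon>/2)"
  have Kc: "compact K" unfolding K_def Diff_eq
    by (rule compact_Int_closed[OF Xc]) (simp add: closed_Compl)
  have KX: "K \<subseteq> X - {z}" unfolding K_def using e by auto
  have ev1: "\<forall>\<^sub>F i in sequentially. \<forall>x\<in>K. dist (\<phi> (g i) x) a < d"
    using gu Kc KX d(1) unfolding uniform_limit_iff by blast
  have ev2: "\<forall>\<^sub>F i in sequentially. dist (\<phi> (g i) z) b < d" using tendstoD[OF gz d(1)] .
  obtain n where n1: "\<forall>x\<in>K. dist (\<phi> (g n) x) a < d" and n2: "dist (\<phi> (g n) z) b < d"
    using eventually_happens'[OF _ eventually_conj[OF ev1 ev2]] by auto
  define f where "f = \<phi> (h \<otimes>\<^bsub>G\<^esub> g n)"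
  have hg: "h \<otimes>\<^bsub>G\<^esub> g n \<in> carrier G" using monoid.m_closed[OF group.is_monoid[OF grp] h(1) gG[rule_format]] .
  have fx: "f x = \<phi> h (\<phi> (g n) x)" if "x \<in> X" for x
    unfolding f_def using group_action.composition_rule[OF ga that h(1) gG[rule_format]] .
  have gX: "\<phi> (g n) x \<in> X" if "x \<in> X" for x using group_action.element_image[OF ga gG[rule_format] that] by blast
  have fX: "f ` X = X" unfolding f_def using group_action.surj_prop[OF ga hg] .
  have fc: "continuous_on X f" unfolding f_def using cont hg by blast
  have fz: "dist (f z) B < \<eta>" unfolding B_def fx[OF z] using d(2) n2 gX[OF z] ab(2) by blast
  have fK: "\<forall>x\<in>X - ball z (\<epsilon>/2). dist (f x) A < \<eta>"
  proof
    fix x assume x: "x \<in> X - ball z (\<epsilon>/2)"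
    then have "x \<in> K" "x \<in> X" unfolding K_def by auto
    then show "dist (f x) A < \<eta>" unfolding A_def fx[OF \<open>x \<in> X\<close>]
      using d(2) n1 gX ab(1) by blast
  qed
  have AB: "dist A B > 5 * \<epsilon>" using h(2) e unfolding A_def B_def by linarith
  obtain V W where VW: "openin (top_of_set X) V \<and> openin (top_of_set X) W \<and> z \<in> V \<and> V \<subseteq> W \<and>
        diameter W \<le> \<epsilon> \<and> diameter (f ` W) > 4 * \<epsilon> \<and>
        closed_nbhd X (2 * \<epsilon>) (f ` V) \<subseteq> f ` W"
    using core[OF Xc fX fc z e(1) AB r(1) eta(1) eta(2) r(3) eta(3) fz fK] by blast
  have ii: "inv\<^bsub>G\<^esub> (inv\<^bsub>G\<^esub> (h \<otimes>\<^bsub>G\<^esub> g n)) = h \<otimes>\<^bsub>G\<^esub> g n"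
    using group.inv_inv[OF grp hg] .
  have iG: "inv\<^bsub>G\<^esub> (h \<otimes>\<^bsub>G\<^esub> g n) \<in> carrier G" using group.inv_closed[OF grp hg] .
  show "\<exists>\<alpha>\<in>carrier G. \<exists>V W.
        openin (top_of_set X) V \<and> openin (top_of_set X) W \<and> z \<in> V \<and> V \<subseteq> W \<and>
        diameter W \<le> \<epsilon> \<and>
        diameter (\<phi> (inv\<^bsub>G\<^esub> \<alpha>) ` W) > 4 * \<epsilon> \<and>
        closed_nbhd X (2 * \<epsilon>) (\<phi> (inv\<^bsub>G\<^esub> \<alpha>) ` V) \<subseteq> \<phi> (inv\<^bsub>G\<^esub> \<alpha>) ` W"
    apply (rule bexI[OF _ iG])
    unfolding ii using VW unfolding f_def by blast
qed

end
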